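(* Let $(|B(\lambda)\rangle,\mathcal{M})$ be an $N$-regular quantum scenario. For any $z_0,z_1\in\{0,1\}$, the linear system $\Psi_0(z_0)\cup\Psi_1(z_1)$ over $\mathbb{Z}_2$ is inconsistent if and only if $\bigoplus_{j=0}^{N-1}r(j,0,z_0)\neq\bigoplus_{j=0}^{N-1}r(j,1,z_1)$.
   Context: $\equiv$ is equality modulo $2\pi$; $\oplus$ is addition mod 2. For $\varphi\in\mathbb{R}$, $E_\varphi=\cos\varphi X+\sin\varphi Y$, with $+1$ eigenvector $|\varphi\rangle=\frac{1}{\sqrt2}(|0\rangle+e^{i\varphi}|1\rangle)$ and $-1$ eigenvector $|\varphi+\pi\rangle$; outcomes $+1,-1$ relabelled $0,1$; measurements identified with angles. A measurement scenario $\mathcal{M}=(M_1,M_2,M_3)$ consists of finite sets $M_i\subseteq[0,\pi)$ of angles for qubit $i$. For a three-qubit state $|\psi\rangle$, the event $(A,B,C)\to(a,b,c)$ is impossible if $(\langle A+a\pi|\otimes\langle B+b\pi|\otimes\langle C+c\pi|)|\psi\rangle=0$. For $\lambda\in[0,\frac{\pi}{2})$, $|v_\lambda\rangle=\cos\frac{\lambda}{2}|0\rangle+\sin\frac{\lambda}{2}|1\rangle$, $|w_\lambda\rangle=\sin\frac{\lambda}{2}|0\rangle+\cos\frac{\lambda}{2}|1\rangle$, $|B(\lambda)\rangle=\frac{1}{\sqrt2}(|00\rangle|v_\lambda\rangle+|11\rangle|w_\lambda\rangle)$. Define modulo $2\pi$: $\beta(\lambda,\varphi)=\varphi-2\arctan\left(\frac{\cos\frac{\lambda}{2}\sin\varphi}{\sin\frac{\lambda}{2}+\cos\frac{\lambda}{2}\cos\varphi}\right)$.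 For $|B(\lambda)\rangle$, the event $(A,B,C)\to(a,b,c)$ is impossible iff $A+B\equiv\beta(\lambda,C+c\pi)+(1\oplus a\oplus b)\pi$. $(|B(\lambda)\rangle,\mathcal{M})$ is maximally impossible if for every $C\in M_3$ and $z\in\{0,1\}$: every $A\in M_1$ admits $B\in M_2$, $a,b$ with $(A,B,C)\to(a,b,z)$ impossible, and every $B\in M_2$ admits $A\in M_1$, $a,b$ with $(A,B,C)\to(a,b,z)$ impossible. In that case $|M_1|=|M_2|=:N$; write $M_1=\{A_0,\dots,A_{N-1}\}$, $M_2=\{B_0,\dots,B_{N-1}\}$, $M_3=\{C_0,\dots,C_{n-1}\}$; for each $(j,l,z)$ there is a unique $k=:K(j,l,z)$ such that $A_j+B_k-\beta(\lambda,C_l+z\pi)$ is an integer multiple of $\pi$, and $r(j,l,z)\in\{0,1\}$ is defined by $A_j+B_{K(j,l,z)}-\beta(\lambda,C_l+z\pi)\equiv r(j,l,z)\pi$. $\Psi_l(z)$ denotes the system of $\mathbb{Z}_2$-linear equations $\{a_j\oplus b_{K(j,l,z)}=r(j,l,z):j=0,\dots,N-1\}$ in unknowns $a_0,\dots,a_{N-1},b_0,\dots,b_{N-1}$. With $n=2$, the scenario has maximal rank if for all $z_0,z_1$ the coefficient matrix of $\Psi_0(z_0)\cup\Psi_1(z_1)$ has rank $2N-1$ over $\mathbb{Z}_2$. The scenario is $N$-regular if it is maximally impossible and of maximal rank, with $|M_1|=|M_2|=N$ and $M_3=\{C_0,C_1\}$. *)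

theory Defs
  imports "HOL-Analysis.Analysis" "HOL-Library.Z2" "Jordan_Normal_Form.DL_Rank"
begin

definition cong2pi :: "real \<Rightarrow> real \<Rightarrow> bool" where
  "cong2pi x y \<longleftrightarrow> (\<exists>k::int. x - y = 2 * pi * of_int k)"

text \<open>Components of the +1 eigenvector |phi> = (|0> + e^{i phi}|1>)/sqrt 2 of E_phi;
  the basis index False stands for |0>, True for |1>.\<close>
definition ket :: "real \<Rightarrow> bool \<Rightarrow> complex" where
  "ket phi x = (if x then cis phi else 1) / complex_of_real (sqrt 2)"

definition vvec :: "real \<Rightarrow> bool \<Rightarrow> real" where
  "vvec lam z = (if z then sin (lam / 2) else cos (lam / 2))"

definition wvec :: "real \<Rightarrow> bool \<Rightarrow> real" where
  "wvec lam z = (if z then cos (lam / 2) else sin (lam / 2))"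

text \<open>Amplitudes of |B(lambda)> = (|00>|v_lambda> + |11>|w_lambda>)/sqrt 2.\<close>
definition Bstate :: "real \<Rightarrow> bool \<Rightarrow> bool \<Rightarrow> bool \<Rightarrow> complex" where
  "Bstate lam x y z =
     (if x = y then complex_of_real (if x then wvec lam z else vvec lam z) else 0)
       / complex_of_real (sqrt 2)"

definition impossible_B :: "real \<Rightarrow> real \<Rightarrow> real \<Rightarrow> real \<Rightarrow> nat \<Rightarrow> nat \<Rightarrow> nat \<Rightarrow> bool" where
  "impossible_B lam A B C a b c \<longleftrightarrow>
     (\<Sum>x\<in>UNIV. \<Sum>y\<in>UNIV. \<Sum>z\<in>UNIV.
        cnj (ket (A + real a * pi) x) * cnj (ket (B + real b * pi) y)
        * cnj (ket (C + real c * pi) z) * Bstate lam x y z) = 0"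

text \<open>beta(lambda, phi), taken modulo 2 pi. When the denominator vanishes (then the numerator
  does not, since 0 <= lambda < pi/2) the arctan term is +-pi/2, so 2 arctan(...) is pi mod 2 pi.\<close>
definition beta :: "real \<Rightarrow> real \<Rightarrow> real" where
  "beta lam phi =
     (let num = cos (lam / 2) * sin phi; den = sin (lam / 2) + cos (lam / 2) * cos phi
      in phi - (if den = 0 then pi else 2 * arctan (num / den)))"

definition measurement_scenario :: "real set \<Rightarrow> real set \<Rightarrow> real set \<Rightarrow> bool" where
  "measurement_scenario M1 M2 M3 \<longleftrightarrow>
     finite M1 \<and> finite M2 \<and> finite M3 \<and>
     M1 \<subseteq> {0..<pi} \<and> M2 \<subseteq> {0..<pi} \<and> M3 \<subseteq> {0..<pi}"

definition maximally_impossible :: "real \<Rightarrow> real set \<Rightarrow> real set \<Rightarrow> real set \<Rightarrow> bool" where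
  "maximally_impossible lam M1 M2 M3 \<longleftrightarrow>
     (\<forall>C\<in>M3. \<forall>z\<in>{0,1}.
        (\<forall>A\<in>M1. \<exists>B\<in>M2. \<exists>a\<in>{0,1}. \<exists>b\<in>{0,1}. impossible_B lam A B C a b z) \<and>
        (\<forall>B\<in>M2. \<exists>A\<in>M1. \<exists>a\<in>{0,1}. \<exists>b\<in>{0,1}. impossible_B lam A B C a b z))"

text \<open>With enumerations M1 = {A 0, ..., A (N-1)}, M2 = {B 0, ..., B (N-1)},
  M3 = {C 0, C 1}: the index K(j,l,z) and the bit r(j,l,z).\<close>
definition Kidx :: "real \<Rightarrow> nat \<Rightarrow> (nat \<Rightarrow> real) \<Rightarrow> (nat \<Rightarrow> real) \<Rightarrow> (nat \<Rightarrow> real)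
                      \<Rightarrow> nat \<Rightarrow> nat \<Rightarrow> nat \<Rightarrow> nat" where
  "Kidx lam N A B C j l z =
     (THE k. k < N \<and> (\<exists>m::int. A j + B k - beta lam (C l + real z * pi) = of_int m * pi))"

definition rbit :: "real \<Rightarrow> nat \<Rightarrow> (nat \<Rightarrow> real) \<Rightarrow> (nat \<Rightarrow> real) \<Rightarrow> (nat \<Rightarrow> real)
                      \<Rightarrow> nat \<Rightarrow> nat \<Rightarrow> nat \<Rightarrow> bit" where
  "rbit lam N A B C j l z =
     (if cong2pi (A j + B (Kidx lam N A B C j l z) - beta lam (C l + real z * pi)) 0
      then 0 else 1)"

text \<open>Unknowns a_0..a_{N-1}, b_0..b_{N-1} are encoded as x :: nat => bit with
  x j = a_j and x (N + k) = b_k (indices < 2N). An equation is a pair (coefficient row, rhs).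
  The j-th equation of Psi_l(z) is a_j + b_{K(j,l,z)} = r(j,l,z).\<close>
definition psi_row :: "real \<Rightarrow> nat \<Rightarrow> (nat \<Rightarrow> real) \<Rightarrow> (nat \<Rightarrow> real) \<Rightarrow> (nat \<Rightarrow> real)
                      \<Rightarrow> nat \<Rightarrow> nat \<Rightarrow> nat \<Rightarrow> (nat \<Rightarrow> bit)" where
  "psi_row lam N A B C l z j =
     (\<lambda>i. if i = j \<or> i = N + Kidx lam N A B C j l z then 1 else 0)"

definition Psi :: "real \<Rightarrow> nat \<Rightarrow> (nat \<Rightarrow> real) \<Rightarrow> (nat \<Rightarrow> real) \<Rightarrow> (nat \<Rightarrow> real)
                      \<Rightarrow> nat \<Rightarrow> nat \<Rightarrow> ((nat \<Rightarrow> bit) \<times> bit) set" where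
  "Psi lam N A B C l z =
     {(psi_row lam N A B C l z j, rbit lam N A B C j l z) | j. j < N}"

definition satisfies_eq :: "nat \<Rightarrow> (nat \<Rightarrow> bit) \<Rightarrow> (nat \<Rightarrow> bit) \<times> bit \<Rightarrow> bool" where
  "satisfies_eq nv x e \<longleftrightarrow> (\<Sum>i<nv. fst e i * x i) = snd e"

definition inconsistent :: "nat \<Rightarrow> ((nat \<Rightarrow> bit) \<times> bit) set \<Rightarrow> bool" where
  "inconsistent nv S \<longleftrightarrow> \<not> (\<exists>x. \<forall>e\<in>S. satisfies_eq nv x e)"

definition coef_mat :: "real \<Rightarrow> nat \<Rightarrow> (nat \<Rightarrow> real) \<Rightarrow> (nat \<Rightarrow> real) \<Rightarrow> (nat \<Rightarrow> real)
                      \<Rightarrow> nat \<Rightarrow> nat \<Rightarrow> bit mat" where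
  "coef_mat lam N A B C z0 z1 =
     mat (2 * N) (2 * N)
       (\<lambda>(i, c). if i < N then psi_row lam N A B C 0 z0 i c
                 else psi_row lam N A B C 1 z1 (i - N) c)"

definition maximal_rank :: "real \<Rightarrow> nat \<Rightarrow> (nat \<Rightarrow> real) \<Rightarrow> (nat \<Rightarrow> real) \<Rightarrow> (nat \<Rightarrow> real) \<Rightarrow> bool" where
  "maximal_rank lam N A B C \<longleftrightarrow>
     (\<forall>z0\<in>{0,1}. \<forall>z1\<in>{0,1}.
        vec_space.rank (2 * N) (coef_mat lam N A B C z0 z1) + 1 = 2 * N)"

definition N_regular :: "real \<Rightarrow> nat \<Rightarrow> (nat \<Rightarrow> real) \<Rightarrow> (nat \<Rightarrow> real) \<Rightarrow> (nat \<Rightarrow> real) \<Rightarrow> bool" where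
  "N_regular lam N A B C \<longleftrightarrow>
     0 \<le> lam \<and> lam < pi / 2 \<and>
     inj_on A {..<N} \<and> inj_on B {..<N} \<and> C 0 \<noteq> C 1 \<and>
     measurement_scenario (A ` {..<N}) (B ` {..<N}) {C 0, C 1} \<and>
     maximally_impossible lam (A ` {..<N}) (B ` {..<N}) {C 0, C 1} \<and>
     maximal_rank lam N A B C"

end

theory Submission
  imports Defs
begin


lemma sin_cos_quarter:
  fixes h :: real assumes "0 \<le> h" "h < pi/4"
  shows "sin h < cos h" "0 < cos h" "0 \<le> sin h"
proof -
  have hp: "h < pi/2" using assms by simp
  show c: "0 < cos h" using assms hp by (intro cos_gt_zero_pi) auto
  show "0 \<le> sin h" using assms hp by (intro sin_ge_zero) auto
  have "sin h < sin (pi/4)" using assms by (intro sin_monotone_2pi) auto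
  also have "sin (pi/4) = cos (pi/4)" by (simp add: sin_45 cos_45)
  also have "cos (pi/4) < cos h" using assms by (intro cos_monotone_0_pi) auto
  finally show "sin h < cos h" .
qed

lemma imp_char:
  fixes lam A B C :: real and a b c :: nat
  assumes lam: "0 \<le> lam" "lam < pi/2"
  assumes imp: "impossible_B lam A B C a b c"
  shows "\<exists>m::int. A + B - beta lam (C + real c * pi) = of_int m * pi"
proof -
  define h where "h = lam/2"
  define \<phi> where "\<phi> = C + real c * pi"
  define \<theta> where "\<theta> = A + real a * pi + (B + real b * pi)"
  define D where "D = sin h + cos h * cos \<phi>"
  define Nn where "Nn = cos h * sin \<phi>"
  define Q where "Q = Complex D Nn"
  have hq: "0 \<le> h" "h < pi/4" using lam by (auto simp: h_def)
  note sc = sin_cos_quarter[OF hq]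
  have s2: "complex_of_real (sqrt 2) * complex_of_real (sqrt 2) * complex_of_real (sqrt 2) * complex_of_real (sqrt 2) = 4"
    by (simp flip: of_real_mult)
  have cth: "cis (- A - real a * pi) * cis (- B - real b * pi) = cis (-\<theta>)"
    by (simp add: cis_mult \<theta>_def algebra_simps)
  from imp have "complex_of_real (cos h) + cis (-\<theta>) * complex_of_real (sin h)
     + (cis (-\<phi>) * complex_of_real (sin h) + cis (-\<theta>) * cis (-\<phi>) * complex_of_real (cos h)) = 0"
    unfolding impossible_B_def ket_def Bstate_def vvec_def wvec_def 
    apply (simp add: UNIV_bool cis_cnj s2 h_def \<phi>_def)
    apply (simp only: cth add_divide_distrib[symmetric])
    apply (simp add: algebra_simps)
    done
  moreover have "Q = complex_of_real (sin h) + complex_of_real (cos h) * cis \<phi>"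
    by (simp add: Q_def D_def Nn_def complex_eq_iff)
  moreover have "cnj Q = complex_of_real (sin h) + complex_of_real (cos h) * cis (-\<phi>)"
    by (simp add: Q_def D_def Nn_def complex_eq_iff)
  ultimately have E: "cis (-\<phi>) * Q + cis (-\<theta>) * cnj Q = 0"
  proof -
    assume e: "complex_of_real (cos h) + cis (-\<theta>) * complex_of_real (sin h)
     + (cis (-\<phi>) * complex_of_real (sin h) + cis (-\<theta>) * cis (-\<phi>) * complex_of_real (cos h)) = 0"
      and q1: "Q = complex_of_real (sin h) + complex_of_real (cos h) * cis \<phi>"
      and q2: "cnj Q = complex_of_real (sin h) + complex_of_real (cos h) * cis (-\<phi>)"
    have cc: "cis \<phi> * (cis (-\<phi>) * x) = x" for x by (simp add: cis_mult mult.assoc[symmetric])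
    have "cis (-\<phi>) * Q + cis (-\<theta>) * cnj Q = complex_of_real (cos h) + cis (-\<theta>) * complex_of_real (sin h)
     + (cis (-\<phi>) * complex_of_real (sin h) + cis (-\<theta>) * cis (-\<phi>) * complex_of_real (cos h))"
      unfolding q2 q1 by (simp add: algebra_simps cc cis_cnj)
    with e show ?thesis by simp
  qed
  have key: "sin (\<theta> - beta lam \<phi>) = 0"
  proof (cases "D = 0")
    case True
    have "Nn \<noteq> 0"
    proof
      assume "Nn = 0"
      then have "sin \<phi> = 0" using sc by (simp add: Nn_def)
      then have "cos \<phi> = 1 \<or> cos \<phi> = -1" using sin_cos_squared_add[of \<phi>]
        by (metis add.commute add_0 power2_eq_1_iff power_zero_numeral zero_power2)
      then show False using True sc by (auto simp: D_def)
    qed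
    have "cnj Q = - Q" using True by (simp add: Q_def complex_eq_iff)
    with E have "(cis (-\<phi>) - cis (-\<theta>)) * Q = 0" by (simp add: algebra_simps)
    moreover have "Q \<noteq> 0" using \<open>Nn \<noteq> 0\<close> by (simp add: Q_def complex_eq_iff)
    ultimately have "cis (-\<phi>) = cis (-\<theta>)" by simp
    then have "cis (-\<phi>) * cis \<theta> = 1" by (simp add: cis_mult)
    then have "cis (\<theta> - \<phi>) = 1" by (simp add: cis_mult)
    then have "Im (cis (\<theta> - \<phi>)) = Im 1" by simp
    then have "sin (\<theta> - \<phi>) = 0" by simp
    moreover have "beta lam \<phi> = \<phi> - pi" using True
      by (simp add: beta_def Let_def D_def h_def)
    ultimately show ?thesis by (simp add: sin_diff)
  next
    case False
    define t where "t = Nn / D"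
    define \<alpha> where "\<alpha> = arctan t"
    define \<rho> where "\<rho> = D * sqrt (1 + t\<^sup>2)"
    have sq: "sqrt (1 + t\<^sup>2) > 0" by (simp add: add_pos_nonneg)
    have Qr: "Q = complex_of_real \<rho> * cis \<alpha>"
      using False sq by (simp add: Q_def complex_eq_iff \<rho>_def \<alpha>_def cos_arctan sin_arctan t_def)
    have Qc: "cnj Q = complex_of_real \<rho> * cis (-\<alpha>)"
      using Qr by (simp add: cis_cnj)
    have "cis (-\<phi>) * Q + cis (-\<theta>) * cnj Q = complex_of_real \<rho> * (cis (-\<phi> + \<alpha>) + cis (-\<theta> + -\<alpha>))"
      unfolding Qc Qr by (simp add: distrib_left mult.left_commute cis_mult cis_cnj)
    with E have "complex_of_real \<rho> * (cis (-\<phi> + \<alpha>) + cis (-\<theta> + -\<alpha>)) = 0" by simp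
    moreover have "\<rho> \<noteq> 0" using False sq by (simp add: \<rho>_def)
    ultimately have "cis (-\<phi> + \<alpha>) + cis (-\<theta> + -\<alpha>) = 0" by simp
    then have "cis (\<theta> + \<alpha>) * (cis (-\<phi> + \<alpha>) + cis (-\<theta> + -\<alpha>)) = 0" by simp
    then have "cis (\<theta> + \<alpha> + (-\<phi> + \<alpha>)) + cis (\<theta> + \<alpha> + (-\<theta> + -\<alpha>)) = 0"
      by (simp only: distrib_left cis_mult)
    moreover have "\<theta> + \<alpha> + (-\<phi> + \<alpha>) = \<theta> + 2 * \<alpha> - \<phi>" "\<theta> + \<alpha> + (-\<theta> + -\<alpha>) = 0" by simp_all
    ultimately have "cis (\<theta> + 2 * \<alpha> - \<phi>) + 1 = 0" by (simp only: cis_zero)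
    then have "Im (cis (\<theta> + 2 * \<alpha> - \<phi>) + 1) = 0" by simp
    then have "sin (\<theta> + 2 * \<alpha> - \<phi>) = 0" by simp
    moreover have "beta lam \<phi> = \<phi> - 2 * \<alpha>" using False
      by (simp add: beta_def Let_def D_def h_def \<alpha>_def t_def Nn_def)
    ultimately show ?thesis by (metis diff_diff_eq2 add_diff_eq)
  qed
  then obtain i :: int where "\<theta> - beta lam \<phi> = of_int i * pi"
    by (auto simp: sin_zero_iff_int2)
  then have "A + B - beta lam \<phi> = of_int (i - int a - int b) * pi"
    by (simp add: \<theta>_def algebra_simps)
  then show ?thesis unfolding \<phi>_def by blast
qed


lemma hyper_solve:
  fixes M :: "'a::field mat" and y e r :: "'a vec"
  assumes M: "M \<in> carrier_mat n n" and rk: "vec_space.rank n M + 1 = n"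
    and y: "y \<in> carrier_vec n" and ycols: "\<And>i. i < n \<Longrightarrow> scalar_prod y (col M i) = 0"
    and e: "e \<in> carrier_vec n" "scalar_prod y e \<noteq> 0"
    and r: "r \<in> carrier_vec n" "scalar_prod y r = 0"
  shows "\<exists>x \<in> carrier_vec n. M *\<^sub>v x = r"
proof -
  interpret vs: vec_space "TYPE('a)" n .
  define H where "H = {v \<in> carrier_vec n. scalar_prod y v = 0}"
  have subH: "submodule class_ring H vs.V"
  proof (unfold_locales)
    show "H \<subseteq> carrier vs.V" by (auto simp: H_def)
    show "v \<oplus>\<^bsub>vs.V\<^esub> w \<in> H" if "v \<in> H" "w \<in> H" for v w
      using that y by (auto simp: H_def scalar_prod_add_distrib)
    show "\<zero>\<^bsub>vs.V\<^esub> \<in> H" using y by (auto simp: H_def)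
    show "c \<odot>\<^bsub>vs.V\<^esub> v \<in> H" if "c \<in> carrier class_ring" "v \<in> H" for c v
      using that y by (auto simp: H_def scalar_prod_smult_distrib)
  qed
  have colsC: "set (cols M) \<subseteq> carrier_vec n" using M cols_dim by blast
  have colsH: "set (cols M) \<subseteq> H"
    using M ycols by (auto simp: H_def cols_def)
  have li0: "vs.lin_indpt {}"
    by (metis (no_types) empty_subsetI vs.fin_dim vs.finite_basis_exists vs.subset_li_is_li vec_vs vectorspace.basis_def)
  obtain S where S: "maximal S (\<lambda>T. T \<subseteq> set (cols M) \<and> vs.lin_indpt T)" "finite S"
    using maximal_exists_superset[of "set (cols M)" "(\<lambda>T. T \<subseteq> set (cols M) \<and> vs.lin_indpt T)" "{}"]
    using li0 by auto
  have cardS: "card S + 1 = n" using vs.rank_card_indpt[OF M S(1)] rk by simp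
  have SC: "S \<subseteq> set (cols M)" "vs.lin_indpt S" using S(1) unfolding maximal_def by auto
  have "r \<in> vs.span (set (cols M))"
  proof (rule ccontr)
    assume nr: "r \<notin> vs.span (set (cols M))"
    have "vs.span S \<subseteq> vs.span (set (cols M))" using SC by (intro vs.span_is_monotone)
    then have rS: "r \<notin> vs.span S" using nr by auto
    have SC': "S \<subseteq> carrier_vec n" using SC colsC by auto
    have "r \<notin> S" using rS vs.in_own_span[OF SC'] by auto
    have li1: "vs.lin_indpt (S \<union> {r})"
      using vs.lin_dep_iff_in_span[OF SC' SC(2) _ \<open>r \<notin> S\<close>] r rS by auto
    have S1H: "S \<union> {r} \<subseteq> H" using SC colsH r by (auto simp: H_def)
    have "vs.span (S \<union> {r}) \<subseteq> H" by (rule vs.span_is_subset[OF S1H subH])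
    then have eS: "e \<notin> vs.span (S \<union> {r})" using e by (auto simp: H_def)
    have "e \<notin> S \<union> {r}" using S1H e by (auto simp: H_def)
    have li2: "vs.lin_indpt (S \<union> {r} \<union> {e})"
      using vs.lin_dep_iff_in_span[OF _ li1 _ \<open>e \<notin> S \<union> {r}\<close>] SC' r e eS by auto
    have "card (S \<union> {r} \<union> {e}) \<le> vs.dim"
      using vs.li_le_dim(2)[OF vs.fin_dim _ li2] SC' r e by auto
    moreover have "card (S \<union> {r} \<union> {e}) = card S + 2"
      using S(2) \<open>r \<notin> S\<close> \<open>e \<notin> S \<union> {r}\<close> by auto
    ultimately show False using cardS vs.dim_is_n by simp
  qed
  then have "r \<in> vs.col_space M" by (simp add: vs.col_space_def)
  then show ?thesis using vs.col_space_eq[OF M] M by auto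
qed

lemma pi_mult_eq:
  fixes x x' :: real and k :: int
  assumes "0 \<le> x" "x < pi" "0 \<le> x'" "x' < pi" "x - x' = of_int k * pi"
  shows "x = x'"
proof -
  have "of_int k * pi < 1 * pi" "-1 * pi < of_int k * pi" using assms by linarith+
  then have "of_int k < (1::real)" "-1 < (of_int k :: real)" using pi_gt_zero
    by (meson mult_less_cancel_right_pos)+
  then have "k = 0" by linarith
  then show ?thesis using assms by simp
qed

lemma K_props:
  assumes reg: "N_regular lam N A B C" and l: "l \<in> {0,1::nat}" and z: "z \<in> {0,1::nat}"
  shows "\<And>j. j < N \<Longrightarrow> Kidx lam N A B C j l z < N \<and>
           (\<exists>m::int. A j + B (Kidx lam N A B C j l z) - beta lam (C l + real z * pi) = of_int m * pi)"
    and "inj_on (\<lambda>j. Kidx lam N A B C j l z) {..<N}"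
proof -
  define bt where "bt = beta lam (C l + real z * pi)"
  have lam: "0 \<le> lam" "lam < pi/2" using reg by (auto simp: N_regular_def)
  have injA: "inj_on A {..<N}" and injB: "inj_on B {..<N}" using reg by (auto simp: N_regular_def)
  have MS: "measurement_scenario (A ` {..<N}) (B ` {..<N}) {C 0, C 1}" using reg by (auto simp: N_regular_def)
  have Ar: "\<And>j. j < N \<Longrightarrow> 0 \<le> A j \<and> A j < pi" and Br: "\<And>j. j < N \<Longrightarrow> 0 \<le> B j \<and> B j < pi"
    using MS by (auto simp: measurement_scenario_def image_subset_iff)
  have MI: "maximally_impossible lam (A ` {..<N}) (B ` {..<N}) {C 0, C 1}" using reg by (auto simp: N_regular_def)
  have Cl: "C l \<in> {C 0, C 1}" using l by auto
  have ex: "\<exists>k<N. \<exists>m::int. A j + B k - bt = of_int m * pi" if j: "j < N" for j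
  proof -
    from MI Cl z j obtain Bv a b where Bv: "Bv \<in> B ` {..<N}" and "impossible_B lam (A j) Bv (C l) a b z"
      unfolding maximally_impossible_def by blast
    then obtain m :: int where "A j + Bv - bt = of_int m * pi" using imp_char[OF lam] bt_def by blast
    moreover obtain k where "k < N" "Bv = B k" using Bv by auto
    ultimately show ?thesis by blast
  qed
  have uniq: "k = k'" if "k < N" "k' < N" "A j + B k - bt = of_int m * pi" "A j + B k' - bt = of_int m' * pi" for j k k' m m'
  proof -
    have "B k - B k' = of_int (m - m') * pi" using that by (simp add: algebra_simps)
    then have "B k = B k'" using Br[OF that(1)] Br[OF that(2)] pi_mult_eq by blast
    then show ?thesis using injB that(1,2) by (auto dest: inj_onD)
  qed
  have K: "Kidx lam N A B C j l z < N \<and> (\<exists>m::int. A j + B (Kidx lam N A B C j l z) - bt = of_int m * pi)"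
    if j: "j < N" for j
  proof -
    obtain k m where km: "k < N" "A j + B k - bt = of_int m * pi" using ex[OF j] by blast
    have "Kidx lam N A B C j l z = k"
      unfolding Kidx_def bt_def[symmetric]
    proof (rule the_equality)
      show "k < N \<and> (\<exists>m::int. A j + B k - bt = of_int m * pi)" using km by blast
      show "k' = k" if "k' < N \<and> (\<exists>m::int. A j + B k' - bt = of_int m * pi)" for k'
        using that km uniq by blast
    qed
    then show ?thesis using km by blast
  qed
  then show "\<And>j. j < N \<Longrightarrow> Kidx lam N A B C j l z < N \<and>
           (\<exists>m::int. A j + B (Kidx lam N A B C j l z) - beta lam (C l + real z * pi) = of_int m * pi)"
    unfolding bt_def by blast
  show "inj_on (\<lambda>j. Kidx lam N A B C j l z) {..<N}"
  proof (rule inj_onI)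
    fix j j' assume j: "j \<in> {..<N}" "j' \<in> {..<N}" and eq: "Kidx lam N A B C j l z = Kidx lam N A B C j' l z"
    obtain m where m: "A j + B (Kidx lam N A B C j l z) - bt = of_int m * pi" using K j by blast
    obtain m' where m': "A j' + B (Kidx lam N A B C j' l z) - bt = of_int m' * pi" using K j by blast
    have "A j - A j' = of_int (m - m') * pi" using m m' eq by (simp add: algebra_simps)
    then have "A j = A j'" using Ar j pi_mult_eq by blast
    then show "j = j'" using injA j by (auto dest: inj_onD)
  qed
qed


lemma sum_split2:
  fixes f :: "nat \<Rightarrow> 'a::comm_monoid_add"
  shows "(\<Sum>i\<in>{0..<2*N}. f i) = (\<Sum>i<N. f i) + (\<Sum>i<N. f (N + i))"
proof -
  have "(\<Sum>i\<in>{0..<2*N}. f i) = (\<Sum>i\<in>{0..<N}. f i) + (\<Sum>i\<in>{N..<2*N}. f i)"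
    by (rule sum.atLeastLessThan_concat[symmetric]) auto
  moreover have "(\<Sum>i\<in>{N..<2*N}. f i) = (\<Sum>i<N. f (N + i))"
    using sum.shift_bounds_nat_ivl[of f 0 N N] by (simp add: mult_2 atLeast0LessThan add.commute)
  ultimately show ?thesis by (simp add: atLeast0LessThan)
qed

lemma colsum:
  fixes K :: "nat \<Rightarrow> nat"
  assumes Kr: "\<And>j. j < N \<Longrightarrow> K j < N" and inj: "inj_on K {..<N}" and c: "c < 2*N"
  shows "(\<Sum>j<N. (if c = j \<or> c = N + K j then 1 else 0 :: bit)) = 1"
proof (cases "c < N")
  case True
  have "(\<Sum>j<N. (if c = j \<or> c = N + K j then 1 else 0 :: bit)) = (\<Sum>j<N. (if c = j then 1 else 0 :: bit))"
    using True by (intro sum.cong) auto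
  also have "\<dots> = 1" using True by simp
  finally show ?thesis .
next
  case False
  have img: "K ` {..<N} = {..<N}" using Kr inj by (intro endo_inj_surj) auto
  have bij: "bij_betw K {..<N} {..<N}" using inj img by (simp add: bij_betw_def)
  have "(\<Sum>j<N. (if c = j \<or> c = N + K j then 1 else 0 :: bit)) = (\<Sum>j<N. (\<lambda>k. if k = c - N then 1 else 0 :: bit) (K j))"
    using False by (intro sum.cong) auto
  also have "\<dots> = (\<Sum>k<N. (if k = c - N then 1 else 0 :: bit))"
    by (rule sum.reindex_bij_betw[OF bij])
  also have "\<dots> = 1" using False c by simp
  finally show ?thesis .
qed

theorem lemma16:
  fixes lam :: real and N :: nat and A B C :: "nat \<Rightarrow> real" and z0 z1 :: nat
  assumes "N_regular lam N A B C"
    and "z0 \<in> {0, 1}" and "z1 \<in> {0, 1}"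
  shows "inconsistent (2 * N) (Psi lam N A B C 0 z0 \<union> Psi lam N A B C 1 z1) \<longleftrightarrow>
         (\<Sum>j<N. rbit lam N A B C j 0 z0) \<noteq> (\<Sum>j<N. rbit lam N A B C j 1 z1)"
proof -
  note reg = assms(1)
  have K0: "\<And>j. j < N \<Longrightarrow> Kidx lam N A B C j 0 z0 < N" "inj_on (\<lambda>j. Kidx lam N A B C j 0 z0) {..<N}"
    using K_props[OF reg _ assms(2), of 0] by auto
  have K1: "\<And>j. j < N \<Longrightarrow> Kidx lam N A B C j 1 z1 < N" "inj_on (\<lambda>j. Kidx lam N A B C j 1 z1) {..<N}"
    using K_props[OF reg _ assms(3), of 1] by auto
  have cs0: "(\<Sum>j<N. psi_row lam N A B C 0 z0 j c) = 1" if "c < 2*N" for c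
    unfolding psi_row_def using colsum[OF K0 that] by simp
  have cs1: "(\<Sum>j<N. psi_row lam N A B C 1 z1 j c) = 1" if "c < 2*N" for c
    unfolding psi_row_def using colsum[OF K1 that] by simp
  define R0 where "R0 = (\<Sum>j<N. rbit lam N A B C j 0 z0)"
  define R1 where "R1 = (\<Sum>j<N. rbit lam N A B C j 1 z1)"
  have tot: "(\<Sum>j<N. rbit lam N A B C j l z) = (\<Sum>i<2*N. x i)"
    if sat: "\<forall>e\<in>Psi lam N A B C l z. satisfies_eq (2*N) x e"
    and cs: "\<And>c. c < 2*N \<Longrightarrow> (\<Sum>j<N. psi_row lam N A B C l z j c) = 1" for l z x
  proof -
    have "(\<Sum>j<N. rbit lam N A B C j l z) = (\<Sum>j<N. \<Sum>i<2*N. psi_row lam N A B C l z j i * x i)"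
    proof (rule sum.cong)
      fix j assume "j \<in> {..<N}"
      then have "(psi_row lam N A B C l z j, rbit lam N A B C j l z) \<in> Psi lam N A B C l z"
        by (auto simp: Psi_def)
      then show "rbit lam N A B C j l z = (\<Sum>i<2*N. psi_row lam N A B C l z j i * x i)"
        using sat by (auto simp: satisfies_eq_def)
    qed simp
    also have "\<dots> = (\<Sum>i<2*N. (\<Sum>j<N. psi_row lam N A B C l z j i) * x i)"
      unfolding sum_distrib_right by (rule sum.swap)
    also have "\<dots> = (\<Sum>i<2*N. x i)" using cs by (intro sum.cong) auto
    finally show ?thesis .
  qed
  have easy: "R0 = R1" if "\<forall>e\<in>Psi lam N A B C 0 z0 \<union> Psi lam N A B C 1 z1. satisfies_eq (2*N) x e" for x
    using tot[of 0 z0 x] tot[of 1 z1 x] that cs0 cs1 unfolding R0_def R1_def by auto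
  have hard: "\<exists>x. \<forall>e\<in>Psi lam N A B C 0 z0 \<union> Psi lam N A B C 1 z1. satisfies_eq (2*N) x e" if eq: "R0 = R1"
  proof -
    define M where "M = coef_mat lam N A B C z0 z1"
    have M: "M \<in> carrier_mat (2*N) (2*N)" by (simp add: M_def coef_mat_def)
    have rk: "vec_space.rank (2*N) M + 1 = 2*N"
      using reg assms(2,3) by (auto simp: N_regular_def maximal_rank_def M_def)
    then have Npos: "0 < N" by (cases N) auto
    define y :: "bit vec" where "y = vec (2*N) (\<lambda>_. 1)"
    define r :: "bit vec" where "r = vec (2*N) (\<lambda>i. if i < N then rbit lam N A B C i 0 z0 else rbit lam N A B C (i - N) 1 z1)"
    have y: "y \<in> carrier_vec (2*N)" by (simp add: y_def)
    have Mij: "M $$ (i, c) = (if i < N then psi_row lam N A B C 0 z0 i c else psi_row lam N A B C 1 z1 (i - N) c)"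
      if "i < 2*N" "c < 2*N" for i c
      using that by (simp add: M_def coef_mat_def)
    have ycols: "scalar_prod y (col M c) = 0" if c: "c < 2*N" for c
    proof -
      have "scalar_prod y (col M c) = (\<Sum>i\<in>{0..<2*N}. M $$ (i, c))"
        unfolding scalar_prod_def using M c by (intro sum.cong) (auto simp: y_def)
      also have "\<dots> = (\<Sum>j<N. psi_row lam N A B C 0 z0 j c) + (\<Sum>j<N. psi_row lam N A B C 1 z1 j c)"
        using c by (simp add: sum_split2 Mij)
      also have "\<dots> = 0" using cs0[OF c] cs1[OF c] by simp
      finally show ?thesis .
    qed
    have e: "unit_vec (2*N) 0 \<in> carrier_vec (2*N)" "scalar_prod y (unit_vec (2*N) 0) \<noteq> 0"
      using Npos y by (auto simp: scalar_prod_right_unit y_def)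
    have r: "r \<in> carrier_vec (2*N)" "scalar_prod y r = 0"
    proof -
      show "r \<in> carrier_vec (2*N)" by (simp add: r_def)
      have "scalar_prod y r = (\<Sum>i\<in>{0..<2*N}. r $ i)" unfolding scalar_prod_def by (intro sum.cong) (auto simp: y_def r_def)
      also have "\<dots> = R0 + R1" by (simp add: sum_split2 r_def R0_def R1_def)
      also have "\<dots> = 0" using eq by simp
      finally show "scalar_prod y r = 0" .
    qed
    obtain x where x: "x \<in> carrier_vec (2*N)" "M *\<^sub>v x = r"
      using hyper_solve[OF M rk y ycols e r] by blast
    have rowj: "(\<Sum>i<2*N. M $$ (j, i) * x $ i) = r $ j" if "j < 2*N" for j
    proof -
      have "r $ j = (M *\<^sub>v x) $ j" using x by simp
      also have "\<dots> = scalar_prod (row M j) x" using that M by simp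
      also have "\<dots> = (\<Sum>i<2*N. M $$ (j, i) * x $ i)"
        unfolding scalar_prod_def using M x that by (intro sum.cong) auto
      finally show ?thesis by simp
    qed
    show ?thesis
    proof (intro exI ballI)
      fix e assume "e \<in> Psi lam N A B C 0 z0 \<union> Psi lam N A B C 1 z1"
      then consider (a) j where "j < N" "e = (psi_row lam N A B C 0 z0 j, rbit lam N A B C j 0 z0)"
        | (b) j where "j < N" "e = (psi_row lam N A B C 1 z1 j, rbit lam N A B C j 1 z1)"
        by (auto simp: Psi_def)
      then show "satisfies_eq (2*N) (\<lambda>i. x $ i) e"
      proof cases
        case a
        have "(\<Sum>i<2*N. M $$ (j, i) * x $ i) = r $ j" using rowj a by simp
        moreover have "(\<Sum>i<2*N. M $$ (j, i) * x $ i) = (\<Sum>i<2*N. psi_row lam N A B C 0 z0 j i * x $ i)"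
          using a by (intro sum.cong) (auto simp: Mij)
        ultimately show ?thesis using a by (simp add: satisfies_eq_def r_def)
      next
        case b
        have "(\<Sum>i<2*N. M $$ (N + j, i) * x $ i) = r $ (N + j)" using rowj b by simp
        moreover have "(\<Sum>i<2*N. M $$ (N + j, i) * x $ i) = (\<Sum>i<2*N. psi_row lam N A B C 1 z1 j i * x $ i)"
          using b by (intro sum.cong) (auto simp: Mij)
        ultimately show ?thesis using b by (simp add: satisfies_eq_def r_def)
      qed
    qed
  qed
  show ?thesis unfolding inconsistent_def R0_def[symmetric] R1_def[symmetric]
    using easy hard by blast
qed
end
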